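(* Let $\mathcal{R}\subset[0,\infty)$ be a non-empty closed set and $\psi\colon\mathbb{R}\to[0,\infty]$ lower semicontinuous. Then $I\colon\mathbb{R}\to[0,\infty]$ defined by $I(a)=\inf_{\gamma\in\mathcal{R}}[\ell(\gamma;a)+\psi(\gamma)]$ is lower semicontinuous.
   Context: For $\gamma\ge0$: $\ell(\gamma;a)=\infty$ for $a<0$, $\ell(\gamma;0)=\gamma$, and $\ell(\gamma;a)=\gamma-a+a\log(a/\gamma)$ for $a>0$ (interpreted as $\infty$ when $\gamma=0$). *)

theory Defs
  imports "HOL-Analysis.Analysis" "HOL-Library.Extended_Real"
begin

definition lsc :: "(real \<Rightarrow> ereal) \<Rightarrow> bool" where
  "lsc f \<longleftrightarrow> (\<forall>x. f x \<le> Liminf (at x) f)"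

definition ell :: "real \<Rightarrow> real \<Rightarrow> ereal" where
  "ell \<gamma> a =
     (if a < 0 then \<infinity>
      else if a = 0 then ereal \<gamma>
      else if \<gamma> = 0 then \<infinity>
      else ereal (\<gamma> - a + a * ln (a / \<gamma>)))"

end

theory Submission
  imports Defs
begin

lemma ell_lower:
  assumes "\<gamma> \<ge> 0" "s > 0"
  shows "ereal ((1-s)*\<gamma> + y*ln s) \<le> ell \<gamma> y"
proof -
  consider "y < 0" | "y = 0" | "y > 0" "\<gamma> = 0" | "y > 0" "\<gamma> > 0" using assms by linarith
  then show ?thesis
  proof cases
    case 2
    have "(1-s)*\<gamma> \<le> 1*\<gamma>" using assms by (intro mult_right_mono) auto
    then show ?thesis using 2 by (simp add: ell_def)
  next
    case 4
    have "ln (s*\<gamma>/y) \<le> s*\<gamma>/y - 1" using 4 assms by (intro ln_le_minus_one) simp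
    hence "y * ln (s*\<gamma>/y) \<le> y*(s*\<gamma>/y - 1)" using 4 by (intro mult_left_mono) auto
    also have "\<dots> = s*\<gamma> - y" using 4 by (simp add: field_simps)
    finally have h: "y * ln (s*\<gamma>/y) \<le> s*\<gamma> - y" .
    have e1: "ln (s*\<gamma>/y) = ln s + ln \<gamma> - ln y" using 4 assms by (simp add: ln_div ln_mult)
    have e2: "ln (y/\<gamma>) = ln y - ln \<gamma>" using 4 assms by (simp add: ln_div)
    show ?thesis using 4 h unfolding ell_def e1 by (simp add: e2 algebra_simps)
  qed (auto simp: ell_def)
qed

lemma ell_sup:
  assumes "\<gamma> \<ge> 0" "ereal c < ell \<gamma> a"
  shows "\<exists>s>0. c < (1-s)*\<gamma> + a*ln s"
proof -
  consider "a < 0" | "a = 0" | "a > 0" "\<gamma> = 0" | "a > 0" "\<gamma> > 0" using assms by linarith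
  then show ?thesis
  proof cases
    case 1
    define t where "t = (\<bar>c\<bar>+1)/a"
    have t0: "t < 0" using 1 unfolding t_def by (simp add: divide_pos_neg)
    have "exp t \<le> 1" using t0 by simp
    hence "(1 - exp t)*\<gamma> \<ge> 0" using assms by simp
    moreover have "a * t = \<bar>c\<bar>+1" using 1 unfolding t_def by simp
    ultimately have "c < (1 - exp t)*\<gamma> + a * ln (exp t)" by simp
    then show ?thesis by (intro exI[of _ "exp t"]) simp
  next
    case 2
    hence cg: "c < \<gamma>" using assms by (simp add: ell_def)
    define s where "s = (\<gamma> - c)/(2*(\<gamma>+1))"
    have s0: "s > 0" using cg assms unfolding s_def by simp
    have "s*\<gamma> < \<gamma> - c"
    proof -
      have "s*\<gamma> = (\<gamma>-c)*(\<gamma>/(2*(\<gamma>+1)))" unfolding s_def by simp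
      also have "\<dots> < (\<gamma>-c)*1"
        using cg assms by (intro mult_strict_left_mono) (auto simp: field_simps)
      finally show ?thesis by simp
    qed
    then show ?thesis using s0 2 by (intro exI[of _ s]) (simp add: algebra_simps)
  next
    case 3
    show ?thesis using 3 by (intro exI[of _ "exp ((\<bar>c\<bar>+1)/a)"]) simp
  next
    case 4
    hence "c < \<gamma> - a + a * ln (a/\<gamma>)" using assms by (simp add: ell_def)
    then show ?thesis using 4 by (intro exI[of _ "a/\<gamma>"]) (simp add: algebra_simps)
  qed
qed

lemma ell_evt:
  assumes "(Y \<longlongrightarrow> a) F" "(G \<longlongrightarrow> \<gamma>) F" "eventually (\<lambda>x. G x \<ge> 0) F" "\<gamma> \<ge> 0"
    "ereal c < ell \<gamma> a"
  shows "eventually (\<lambda>x. ereal c < ell (G x) (Y x)) F"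
proof -
  obtain s where s: "s > 0" "c < (1-s)*\<gamma> + a*ln s" using ell_sup assms by blast
  have "((\<lambda>x. (1-s)*G x + Y x * ln s) \<longlongrightarrow> (1-s)*\<gamma> + a*ln s) F"
    using assms by (intro tendsto_intros)
  hence "eventually (\<lambda>x. c < (1-s)*G x + Y x * ln s) F" using s(2) by (rule order_tendstoD)
  then show ?thesis using assms(3)
  proof eventually_elim
    case (elim x)
    then show ?case using ell_lower[of "G x" s "Y x"] s
      by (meson ereal_less_eq(3) less_le_trans order_less_imp_le ereal_less(2) less_ereal.simps(1))
  qed
qed

lemma ell_nonneg: "\<gamma> \<ge> 0 \<Longrightarrow> ell \<gamma> y \<ge> 0"
  using ell_lower[of \<gamma> 1 y] by (simp add: zero_ereal_def)

lemma split_sum: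
  fixes A B :: ereal
  assumes "ereal c < A + B" "A \<ge> 0" "B \<ge> 0"
  shows "\<exists>c1 c2. ereal c1 < A \<and> ereal c2 < B \<and> c \<le> c1 + c2"
proof (cases A)
  case (real a)
  show ?thesis
  proof (cases B)
    case (real b)
    show ?thesis using assms \<open>A = ereal a\<close> real
      by (intro exI[of _ "a - (a+b-c)/2"] exI[of _ "b - (a+b-c)/2"]) auto
  next
    case PInf
    show ?thesis using \<open>A = ereal a\<close> PInf
      by (intro exI[of _ "a - 1"] exI[of _ "c - a + 1"]) auto
  next
    case MInf then show ?thesis using assms by simp
  qed
next
  case PInf
  show ?thesis
  proof (cases B)
    case (real b)
    show ?thesis using PInf real
      by (intro exI[of _ "c - b + 1"] exI[of _ "b - 1"]) auto
  next
    case PInf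
    show ?thesis using \<open>A = \<infinity>\<close> PInf by (intro exI[of _ c] exI[of _ 0]) auto
  next
    case MInf then show ?thesis using assms by simp
  qed
next
  case MInf then show ?thesis using assms by simp
qed

lemma psi_evt:
  assumes "lsc \<psi>" "(G \<longlongrightarrow> \<gamma>) F" "ereal c < \<psi> \<gamma>"
  shows "eventually (\<lambda>x. ereal c < \<psi> (G x)) F"
proof -
  have "ereal c < (SUP e\<in>{0<..}. INF y\<in>(ball \<gamma> e - {\<gamma>}). \<psi> y)"
    using assms(1,3) unfolding lsc_def Liminf_at by (meson less_le_trans)
  then obtain e where e: "e > 0" "ereal c < (INF y\<in>(ball \<gamma> e - {\<gamma>}). \<psi> y)"
    by (auto simp: less_SUP_iff)
  have all: "ereal c < \<psi> y" if "dist y \<gamma> < e" for y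
  proof (cases "y = \<gamma>")
    case False
    hence "y \<in> ball \<gamma> e - {\<gamma>}" using that by (simp add: dist_commute)
    thus ?thesis using e(2) by (meson INF_lower less_le_trans)
  qed (use assms in auto)
  have "eventually (\<lambda>x. dist (G x) \<gamma> < e) F" using assms(2) e(1) by (rule tendstoD)
  then show ?thesis by eventually_elim (rule all)
qed

theorem proposition7:
  fixes R :: "real set" and \<psi> :: "real \<Rightarrow> ereal"
  assumes "R \<noteq> {}" and "closed R" and "R \<subseteq> {0..}"
    and "\<And>x. \<psi> x \<ge> 0" and "lsc \<psi>"
  shows "lsc (\<lambda>a. INF \<gamma>\<in>R. ell \<gamma> a + \<psi> \<gamma>)"
proof -
  define I where "I = (\<lambda>a. INF \<gamma>\<in>R. ell \<gamma> a + \<psi> \<gamma>)"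
  have key: "\<exists>e>0. \<forall>y. dist y a < e \<longrightarrow> ereal r \<le> I y" if ra: "ereal r < I a" for a r
  proof (rule ccontr)
    assume "\<not> ?thesis"
    hence "\<forall>n. \<exists>y \<gamma>. dist y a < inverse (real (Suc n)) \<and> \<gamma> \<in> R \<and> ell \<gamma> y + \<psi> \<gamma> < ereal r"
    proof (intro allI)
      fix n
      assume "\<not> (\<exists>e>0. \<forall>y. dist y a < e \<longrightarrow> ereal r \<le> I y)"
      then obtain y where y: "dist y a < inverse (real (Suc n))" "\<not> ereal r \<le> I y"
        by (metis inverse_positive_iff_positive of_nat_0_less_iff zero_less_Suc)
      hence "I y < ereal r" by simp
      then obtain \<gamma> where "\<gamma> \<in> R" "ell \<gamma> y + \<psi> \<gamma> < ereal r"
        unfolding I_def by (auto simp: INF_less_iff)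
      then show "\<exists>y \<gamma>. dist y a < inverse (real (Suc n)) \<and> \<gamma> \<in> R \<and> ell \<gamma> y + \<psi> \<gamma> < ereal r"
        using y by blast
    qed
    then obtain Y G where YG: "\<And>n. dist (Y n) a < inverse (real (Suc n))"
      "\<And>n. G n \<in> R" "\<And>n. ell (G n) (Y n) + \<psi> (G n) < ereal r"
      by metis
    have G0: "G n \<ge> 0" for n using YG(2) assms(3) by auto
    have Ylim: "Y \<longlonglongrightarrow> a"
    proof (rule LIMSEQ_I)
      fix e :: real assume "e > 0"
      then obtain N where N: "inverse (real (Suc N)) < e" using reals_Archimedean by blast
      have "norm (Y n - a) < e" if "n \<ge> N" for n
      proof -
        have "inverse (real (Suc n)) \<le> inverse (real (Suc N))" using that
          by (simp add: le_imp_inverse_le)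
        moreover have "norm (Y n - a) < inverse (real (Suc n))" using YG(1)[of n] by (simp add: dist_norm)
        ultimately show ?thesis using N by linarith
      qed
      thus "\<exists>no. \<forall>n\<ge>no. norm (Y n - a) < e" by blast
    qed
    define M where "M = 2*(\<bar>r\<bar> + \<bar>a\<bar> + 2)"
    have GM: "G n \<le> M" for n
    proof (rule ccontr)
      assume "\<not> G n \<le> M"
      hence Gn: "G n > M" by simp
      have "inverse (real (Suc n)) \<le> 1" by (simp add: inverse_le_1_iff)
      hence "\<bar>Y n - a\<bar> < 1" using YG(1)[of n] by (simp add: dist_real_def)
      hence Yb: "\<bar>Y n\<bar> \<le> \<bar>a\<bar> + 1" by linarith
      have "\<bar>Y n * ln 2\<bar> = \<bar>Y n\<bar> * ln 2" by (simp add: abs_mult)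
      also have "\<dots> \<le> \<bar>Y n\<bar> * 1" using ln_2_less_1 by (intro mult_left_mono) auto
      finally have Lb: "Y n * ln (1/2) \<ge> -(\<bar>a\<bar> + 1)" using Yb by (simp add: ln_div)
      define L where "L = Y n * ln (1/2)"
      have "r \<le> \<bar>r\<bar>" by simp
      hence "r < (1 - 1/2) * G n + L" using Gn Lb unfolding M_def L_def[symmetric]
        by (simp add: field_simps)
      hence lt: "r < (1 - 1/2) * G n + Y n * ln (1/2)" unfolding L_def .
      have "ereal r < ell (G n) (Y n)"
        using ell_lower[of "G n" "1/2" "Y n"] G0 lt by (meson ereal_less(2) less_ereal.simps(1) less_le_trans half_gt_zero zero_less_one)
      also have "\<dots> \<le> ell (G n) (Y n) + \<psi> (G n)" using assms(4) by (simp add: ereal_le_add_self)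
      finally show False using YG(3)[of n] by simp
    qed
    have "bounded (range G)"
      by (rule bounded_subset[of "{0..M}"]) (use G0 GM in auto)
    then obtain l \<rho> where \<rho>: "strict_mono \<rho>" "(G \<circ> \<rho>) \<longlonglongrightarrow> l"
      using bounded_imp_convergent_subsequence by blast
    have lR: "l \<in> R" by (rule closed_sequentially[OF assms(2) _ \<rho>(2)]) (simp add: YG(2))
    hence l0: "l \<ge> 0" using assms(3) by auto
    have Ylim': "(Y \<circ> \<rho>) \<longlonglongrightarrow> a" using Ylim \<rho>(1) by (rule LIMSEQ_subseq_LIMSEQ)
    have "I a \<le> ell l a + \<psi> l" unfolding I_def using lR by (rule INF_lower)
    hence "ereal r < ell l a + \<psi> l" using ra by simp
    then obtain c1 c2 where c: "ereal c1 < ell l a" "ereal c2 < \<psi> l" "r \<le> c1 + c2"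
      using split_sum ell_nonneg[OF l0] assms(4) by blast
    have e1: "eventually (\<lambda>n. ereal c1 < ell ((G \<circ> \<rho>) n) ((Y \<circ> \<rho>) n)) sequentially"
      using Ylim' \<rho>(2) _ l0 c(1) by (rule ell_evt) (simp add: G0)
    have e2: "eventually (\<lambda>n. ereal c2 < \<psi> ((G \<circ> \<rho>) n)) sequentially"
      using assms(5) \<rho>(2) c(2) by (rule psi_evt)
    from e1 e2 obtain n where n: "ereal c1 < ell ((G \<circ> \<rho>) n) ((Y \<circ> \<rho>) n)"
       "ereal c2 < \<psi> ((G \<circ> \<rho>) n)"
      using eventually_sequentially by (metis (no_types, lifting) eventually_conj_iff order_refl)
    have "ereal (c1 + c2) < ell (G (\<rho> n)) (Y (\<rho> n)) + \<psi> (G (\<rho> n))"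
      using ereal_add_strict_mono2[OF n] by simp
    moreover have "ell (G (\<rho> n)) (Y (\<rho> n)) + \<psi> (G (\<rho> n)) < ereal r" by (rule YG(3))
    ultimately show False using c(3) by (metis ereal_less_eq(3) less_trans not_less)
  qed
  show ?thesis unfolding lsc_def I_def[symmetric]
  proof
    fix a
    show "I a \<le> Liminf (at a) I" unfolding Liminf_at
    proof (rule dense_le)
      fix c assume "c < I a"
      then obtain r where r: "c < ereal r" "ereal r < I a" using ereal_dense2 by blast
      obtain e where e: "e > 0" "\<forall>y. dist y a < e \<longrightarrow> ereal r \<le> I y" using key[OF r(2)] by blast
      have "ereal r \<le> (INF y\<in>(ball a e - {a}). I y)"
        using e(2) by (intro INF_greatest) (auto simp: dist_commute)
      also have "\<dots> \<le> (SUP e\<in>{0<..}. INF y\<in>(ball a e - {a}). I y)"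
        using e(1) by (intro SUP_upper) auto
      finally show "c \<le> (SUP e\<in>{0<..}. INF y\<in>(ball a e - {a}). I y)" using r(1) by simp
    qed
  qed
qed

end
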